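(* Let $n=6$, $j_0=1$ and $j_i=3$ for all $i\in\mathbb Z/(6)\setminus\{0\}$. Define $\sigma_{(i,j)}(k,l)=(k+j,\ l-j_{k+j-i})$ on $X=(\mathbb Z/(6))^2$ and $r((i,j),(k,l))=(\sigma_{(i,j)}(k,l),\sigma^{-1}_{\sigma_{(i,j)}(k,l)}(i,j))$. Then $(X,r)$ is an indecomposable and irretractable solution of the YBE which is not simple.
   Context: A solution of the YBE is a pair $(X,r)$, $X$ nonempty, $r:X\times X\to X\times X$, $r(x,y)=(\sigma_x(y),\gamma_y(x))$, with $r^2=\mathrm{id}$, all $\sigma_x,\gamma_x$ bijective, and $r_{12}r_{23}r_{12}=r_{23}r_{12}r_{23}$ on $X^3$. Indecomposable: $\langle\sigma_x\rangle\le \mathrm{Sym}_X$ transitive on $X$. Irretractable: $\sigma_x\ne\sigma_y$ for $x\ne y$. A homomorphism of solutions $f:(X,r)\to(Y,s)$ (with $s(t,z)=(\sigma'_t(z),\gamma'_z(t))$) is a map with $f(\sigma_x(y))=\sigma'_{f(x)}(f(y))$; $(X,r)$ is simple if $|X|>1$ and every surjective homomorphism of solutions $f:(X,r)\to(Y,s)$ is bijective or has $|Y|=1$. *)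

theory Defs
  imports Main "HOL-Library.Numeral_Type"
begin

definition ybe_sigma :: "('a \<times> 'a \<Rightarrow> 'a \<times> 'a) \<Rightarrow> 'a \<Rightarrow> 'a \<Rightarrow> 'a" where
  "ybe_sigma r x y = fst (r (x, y))"

definition ybe_gamma :: "('a \<times> 'a \<Rightarrow> 'a \<times> 'a) \<Rightarrow> 'a \<Rightarrow> 'a \<Rightarrow> 'a" where
  "ybe_gamma r y x = snd (r (x, y))"

definition r12 :: "('a \<times> 'a \<Rightarrow> 'a \<times> 'a) \<Rightarrow> 'a \<times> 'a \<times> 'a \<Rightarrow> 'a \<times> 'a \<times> 'a" where
  "r12 r = (\<lambda>(x, y, z). (let (a, b) = r (x, y) in (a, b, z)))"

definition r23 :: "('a \<times> 'a \<Rightarrow> 'a \<times> 'a) \<Rightarrow> 'a \<times> 'a \<times> 'a \<Rightarrow> 'a \<times> 'a \<times> 'a" where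
  "r23 r = (\<lambda>(x, y, z). (let (b, c) = r (y, z) in (x, b, c)))"

definition ybe_solution :: "'a set \<Rightarrow> ('a \<times> 'a \<Rightarrow> 'a \<times> 'a) \<Rightarrow> bool" where
  "ybe_solution X r \<longleftrightarrow>
     X \<noteq> {} \<and>
     (\<forall>x\<in>X. \<forall>y\<in>X. r (x, y) \<in> X \<times> X) \<and>
     (\<forall>x\<in>X. \<forall>y\<in>X. r (r (x, y)) = (x, y)) \<and>
     (\<forall>x\<in>X. bij_betw (ybe_sigma r x) X X \<and> bij_betw (ybe_gamma r x) X X) \<and>
     (\<forall>x\<in>X. \<forall>y\<in>X. \<forall>z\<in>X.
        r12 r (r23 r (r12 r (x, y, z))) = r23 r (r12 r (r23 r (x, y, z))))"

inductive_set sigma_group :: "'a set \<Rightarrow> ('a \<times> 'a \<Rightarrow> 'a \<times> 'a) \<Rightarrow> ('a \<Rightarrow> 'a) set"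
  for X r where
  sg_id: "id \<in> sigma_group X r"
| sg_sigma: "g \<in> sigma_group X r \<Longrightarrow> x \<in> X \<Longrightarrow> ybe_sigma r x \<circ> g \<in> sigma_group X r"
| sg_inv: "g \<in> sigma_group X r \<Longrightarrow> x \<in> X \<Longrightarrow> inv_into X (ybe_sigma r x) \<circ> g \<in> sigma_group X r"

definition indecomposable :: "'a set \<Rightarrow> ('a \<times> 'a \<Rightarrow> 'a \<times> 'a) \<Rightarrow> bool" where
  "indecomposable X r \<longleftrightarrow> (\<forall>x\<in>X. \<forall>y\<in>X. \<exists>g\<in>sigma_group X r. g x = y)"

definition irretractable :: "'a set \<Rightarrow> ('a \<times> 'a \<Rightarrow> 'a \<times> 'a) \<Rightarrow> bool" where
  "irretractable X r \<longleftrightarrow>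
     (\<forall>x\<in>X. \<forall>y\<in>X. x \<noteq> y \<longrightarrow> (\<exists>z\<in>X. ybe_sigma r x z \<noteq> ybe_sigma r y z))"

definition solution_hom ::
  "'a set \<Rightarrow> ('a \<times> 'a \<Rightarrow> 'a \<times> 'a) \<Rightarrow> 'b set \<Rightarrow> ('b \<times> 'b \<Rightarrow> 'b \<times> 'b) \<Rightarrow> ('a \<Rightarrow> 'b) \<Rightarrow> bool" where
  "solution_hom X r Y s f \<longleftrightarrow>
     f ` X \<subseteq> Y \<and>
     (\<forall>x\<in>X. \<forall>y\<in>X. f (ybe_sigma r x y) = ybe_sigma s (f x) (f y))"

text \<open>Target solutions range over carriers of the same type as X;
 this loses nothing, since the image of a surjection from X has cardinality at
 most that of X and can be transported into the type of X.\<close>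
definition simple_solution :: "'a set \<Rightarrow> ('a \<times> 'a \<Rightarrow> 'a \<times> 'a) \<Rightarrow> bool" where
  "simple_solution X r \<longleftrightarrow>
     (\<exists>x\<in>X. \<exists>y\<in>X. x \<noteq> y) \<and>
     (\<forall>(Y :: 'a set) s f. ybe_solution Y s \<and> solution_hom X r Y s f \<and> f ` X = Y \<longrightarrow>
        bij_betw f X Y \<or> (\<exists>a. Y = {a}))"

definition jj :: "6 \<Rightarrow> 6" where
  "jj t = (if t = 0 then 1 else 3)"

definition sig6 :: "6 \<times> 6 \<Rightarrow> 6 \<times> 6 \<Rightarrow> 6 \<times> 6" where
  "sig6 = (\<lambda>(i, j) (k, l). (k + j, l - jj (k + j - i)))"

definition r6 :: "(6 \<times> 6) \<times> (6 \<times> 6) \<Rightarrow> (6 \<times> 6) \<times> (6 \<times> 6)" where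
  "r6 = (\<lambda>(x, y). (sig6 x y, inv (sig6 (sig6 x y)) x))"

end

theory Submission
  imports Defs
begin

lemma r12_simp: "r12 r (x, y, z) = (fst (r (x, y)), snd (r (x, y)), z)"
  by (simp add: r12_def split: prod.splits)

lemma r23_simp: "r23 r (x, y, z) = (x, fst (r (y, z)), snd (r (y, z)))"
  by (simp add: r23_def split: prod.splits)

lemma generic_ybe:
  fixes \<sigma> \<sigma>i :: "'a \<Rightarrow> 'a \<Rightarrow> 'a"
  assumes inv1: "\<And>x y. \<sigma> x (\<sigma>i x y) = y"
    and inv2: "\<And>x y. \<sigma>i x (\<sigma> x y) = y"
    and star: "\<And>x y z. \<sigma> x (\<sigma> y z) = \<sigma> (\<sigma> x y) (\<sigma> (\<sigma>i (\<sigma> x y) x) z)"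
    and rdef: "r = (\<lambda>(x, y). (\<sigma> x y, \<sigma>i (\<sigma> x y) x))"
  shows "r12 r (r23 r (r12 r t)) = r23 r (r12 r (r23 r t))"
proof -
  define \<Phi> where "\<Phi> = (\<lambda>(x, y, z). (x, \<sigma> x y, \<sigma> x (\<sigma> y z)))"
  have injP: "inj \<Phi>"
  proof (rule injI)
    fix a b assume "\<Phi> a = \<Phi> b"
    then show "a = b" unfolding \<Phi>_def
      by (cases a; cases b; simp) (metis inv2)
  qed
  have P12: "\<Phi> (r12 r (x, y, z)) = (case \<Phi> (x, y, z) of (a, b, c) \<Rightarrow> (b, a, c))" for x y z
    by (simp add: \<Phi>_def r12_simp rdef inv1 star[symmetric])
  have P23: "\<Phi> (r23 r (x, y, z)) = (case \<Phi> (x, y, z) of (a, b, c) \<Rightarrow> (a, c, b))" for x y z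
    by (simp add: \<Phi>_def r23_simp rdef inv1)
  have P12': "\<Phi> (r12 r u) = (case \<Phi> u of (a, b, c) \<Rightarrow> (b, a, c))" for u
    using P12 by (cases u) auto
  have P23': "\<Phi> (r23 r u) = (case \<Phi> u of (a, b, c) \<Rightarrow> (a, c, b))" for u
    using P23 by (cases u) auto
  have "\<Phi> (r12 r (r23 r (r12 r t))) = \<Phi> (r23 r (r12 r (r23 r t)))"
    by (simp add: P12' P23' split: prod.splits)
  then show ?thesis using injP by (simp add: inj_eq)
qed

lemma generic_invol:
  fixes \<sigma> \<sigma>i :: "'a \<Rightarrow> 'a \<Rightarrow> 'a"
  assumes inv1: "\<And>x y. \<sigma> x (\<sigma>i x y) = y"
    and inv2: "\<And>x y. \<sigma>i x (\<sigma> x y) = y"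
    and rdef: "r = (\<lambda>(x, y). (\<sigma> x y, \<sigma>i (\<sigma> x y) x))"
  shows "r (r (x, y)) = (x, y)"
  by (simp add: rdef inv1 inv2)

definition sinv :: "6 \<times> 6 \<Rightarrow> 6 \<times> 6 \<Rightarrow> 6 \<times> 6" where
  "sinv = (\<lambda>(i, j) (a, b). (a - j, b + jj (a - i)))"

lemma jj_neg: "jj (- t) = jj t"
  by (simp add: jj_def)

lemma jj_swap: "jj (a - b) = jj (b - a)"
  by (simp add: jj_def)

lemma jj_sym: "jj (i - k - j) = jj (k + j - i)"
  using jj_swap[of i "k + j"] by (simp add: diff_diff_eq)

lemma sig6_app: "sig6 (i, j) (k, l) = (k + j, l - jj (k + j - i))"
  by (simp add: sig6_def)

lemma sinv_app: "sinv (i, j) (a, b) = (a - j, b + jj (a - i))"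
  by (simp add: sinv_def)

lemma sig_sinv: "sig6 x (sinv x y) = y"
  by (cases x; cases y) (simp add: sig6_def sinv_def)

lemma sinv_sig: "sinv x (sig6 x y) = y"
  by (cases x; cases y) (simp add: sig6_def sinv_def)

lemma inv_sig: "inv (sig6 x) = sinv x"
  by (rule inv_equality) (simp_all add: sig_sinv sinv_sig)

lemma r6_eq: "r6 = (\<lambda>(x, y). (sig6 x y, sinv (sig6 x y) x))"
  by (simp add: r6_def inv_sig)

lemma star6: "sig6 x (sig6 y z) = sig6 (sig6 x y) (sig6 (sinv (sig6 x y) x) z)"
proof -
  obtain i j where x: "x = (i, j)" by (cases x)
  obtain k l where y: "y = (k, l)" by (cases y)
  obtain m n where z: "z = (m, n)" by (cases z)
  define t where "t = jj (k + j - i)"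
  have s1: "sig6 x y = (k + j, l - t)" by (simp add: x y sig6_app t_def)
  have ja: "jj (i - (k + j)) = t" unfolding t_def by (rule jj_swap)
  have s2: "sinv (k + j, l - t) x = (i - l + t, j + t)"
    by (simp only: x sinv_app ja) (simp add: algebra_simps)
  have a3: "m + (j + t) - (i - l + t) = m + l + j - i" by (simp add: algebra_simps)
  have s3: "sig6 (i - l + t, j + t) z = (m + (j + t), n - jj (m + l + j - i))"
    by (simp only: z sig6_app a3)
  have a4: "m + (j + t) + (l - t) = m + l + j" by (simp add: algebra_simps)
  have a5: "m + l + j - (k + j) = m + l - k" by (simp add: algebra_simps)
  have s4: "sig6 (k + j, l - t) (m + (j + t), n - jj (m + l + j - i))
      = (m + l + j, n - jj (m + l + j - i) - jj (m + l - k))"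
    by (simp only: sig6_app a4 a5)
  have a6: "m + l + j = m + l + j" ..
  have s5: "sig6 x (sig6 y z) = (m + l + j, n - jj (m + l - k) - jj (m + l + j - i))"
    by (simp only: x y z sig6_app add.assoc[symmetric] add.commute[of j l])
  show ?thesis
    by (simp only: s1 s2 s3 s4 s5) (simp add: algebra_simps)
qed

lemma sigma_r6: "ybe_sigma r6 x = sig6 x"
  by (rule ext) (simp add: ybe_sigma_def r6_eq)

lemma bij_sig: "bij (sig6 x)"
  unfolding bij_def
  by (metis injI sinv_sig surjI sig_sinv)

lemma gamma_inj: "inj (ybe_gamma r6 y)"
proof (rule injI)
  fix x x' assume h: "ybe_gamma r6 y x = ybe_gamma r6 y x'"
  obtain i j where x: "x = (i, j)" by (cases x)
  obtain i' j' where x': "x' = (i', j')" by (cases x')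
  obtain k l where y: "y = (k, l)" by (cases y)
  have g: "ybe_gamma r6 y (a, b) = (a - l + jj (k + b - a), b + jj (k + b - a))" for a b
    using jj_swap[of a "k + b"]
    by (simp add: ybe_gamma_def r6_eq y sig6_app sinv_app algebra_simps)
  have e1: "i - l + jj (k + j - i) = i' - l + jj (k + j' - i')"
   and e2: "j + jj (k + j - i) = j' + jj (k + j' - i')"
    using h by (simp_all add: x x' g)
  have "j - i = (j + jj (k + j - i)) - (i - l + jj (k + j - i)) - l" by (simp add: algebra_simps)
  also have "\<dots> = (j' + jj (k + j' - i')) - (i' - l + jj (k + j' - i')) - l" by (simp only: e1 e2)
  also have "\<dots> = j' - i'" by (simp add: algebra_simps)
  finally have d: "j - i = j' - i'" .
  have "k + j - i = k + (j - i)" by (simp add: algebra_simps)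
  also have "\<dots> = k + j' - i'" using d by (simp add: algebra_simps)
  finally have kk: "k + j - i = k + j' - i'" .
  have t: "jj (k + j - i) = jj (k + j' - i')" by (simp only: kk)
  from e2 t have "j = j'" by simp
  moreover from e1 t have "i = i'" by simp
  ultimately show "x = x'" by (simp add: x x')
qed

lemma gamma_bij: "bij (ybe_gamma r6 y)"
  using gamma_inj finite_UNIV_inj_surj[of "ybe_gamma r6 y"] by (simp add: bij_def)

lemma ybe6: "ybe_solution (UNIV :: (6 \<times> 6) set) r6"
  unfolding ybe_solution_def
  using generic_ybe[OF sig_sinv sinv_sig star6 r6_eq]
        generic_invol[OF sig_sinv sinv_sig r6_eq]
  by (simp add: sigma_r6 bij_sig gamma_bij)


lemma ex_of_nat6: "\<exists>n. (of_nat n :: 6) = z"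
proof (cases z rule: bit0_cases)
  case (of_int w)
  then have "(of_nat (nat w) :: 6) = z" by simp
  then show ?thesis by blast
qed

definition reach :: "6 \<times> 6 \<Rightarrow> 6 \<times> 6 \<Rightarrow> bool" where
  "reach x y \<longleftrightarrow> (\<exists>g\<in>sigma_group UNIV r6. g x = y)"

lemma reach_refl: "reach x x"
  unfolding reach_def by (rule bexI[OF _ sg_id]) simp

lemma reach_step: "reach x y \<Longrightarrow> reach x (sig6 p y)"
  unfolding reach_def
proof -
  assume "\<exists>g\<in>sigma_group UNIV r6. g x = y"
  then obtain g where g: "g \<in> sigma_group UNIV r6" "g x = y" by blast
  have "ybe_sigma r6 p \<circ> g \<in> sigma_group UNIV r6" using g(1) by (rule sg_sigma) simp
  moreover have "(ybe_sigma r6 p \<circ> g) x = sig6 p y" using g(2) by (simp add: sigma_r6)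
  ultimately show "\<exists>g\<in>sigma_group UNIV r6. g x = sig6 p y" by blast
qed

lemma reachA: "reach x (k, l) \<Longrightarrow> reach x (k, l - of_nat n)"
proof (induction n)
  case 0 then show ?case by simp
next
  case (Suc n)
  then have "reach x (sig6 (k, 0) (k, l - of_nat n))" using reach_step by blast
  moreover have "sig6 (k, 0) (k, l - of_nat n) = (k, l - of_nat (Suc n))"
    by (simp add: sig6_app jj_def algebra_simps)
  ultimately show ?case by simp
qed

lemma reachB: "reach x (k, l) \<Longrightarrow> reach x (k + of_nat n, l - of_nat n)"
proof (induction n)
  case 0 then show ?case by simp
next
  case (Suc n)
  then have "reach x (sig6 (k + of_nat n + 1, 1) (k + of_nat n, l - of_nat n))" using reach_step by blast
  moreover have "sig6 (k + of_nat n + 1, 1) (k + of_nat n, l - of_nat n) = (k + of_nat (Suc n), l - of_nat (Suc n))"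
    by (simp add: sig6_app jj_def algebra_simps)
  ultimately show ?case by simp
qed

lemma indec6: "indecomposable UNIV r6"
  unfolding indecomposable_def
proof (intro ballI)
  fix x y :: "6 \<times> 6"
  obtain k l where x: "x = (k, l)" by (cases x)
  obtain k' l' where y: "y = (k', l')" by (cases y)
  obtain n where n: "(of_nat n :: 6) = k' - k" using ex_of_nat6 by blast
  obtain m where m: "(of_nat m :: 6) = l - of_nat n - l'" using ex_of_nat6 by blast
  have "reach x (k + of_nat n, l - of_nat n)" using reachB[OF reach_refl[of x, unfolded x]] x by simp
  then have "reach x (k + of_nat n, l - of_nat n - of_nat m)" by (rule reachA)
  then have "reach x y" using n m y by simp
  then show "\<exists>g\<in>sigma_group UNIV r6. g x = y" by (simp add: reach_def)
qed

lemma irr6: "irretractable UNIV r6"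
  unfolding irretractable_def sigma_r6
proof (intro ballI impI)
  fix x y :: "6 \<times> 6" assume ne: "x \<noteq> y"
  obtain i j where x: "x = (i, j)" by (cases x)
  obtain i' j' where y: "y = (i', j')" by (cases y)
  show "\<exists>z\<in>UNIV. sig6 x z \<noteq> sig6 y z"
  proof (cases "j = j'")
    case False
    then show ?thesis by (intro bexI[of _ "(0, 0)"]) (simp_all add: x y sig6_app)
  next
    case True
    with ne x y have "i \<noteq> i'" by simp
    then have "i - i' \<noteq> 0" by simp
    then have "sig6 x (i - j, 0) \<noteq> sig6 y (i - j, 0)"
      by (simp add: x y True sig6_app jj_def)
    then show ?thesis by blast
  qed
qed

definition sp :: "6 \<times> 6 \<Rightarrow> 6 \<times> 6 \<Rightarrow> 6 \<times> 6" where
  "sp = (\<lambda>(a, b) (c, d). (c + b, d + 3))"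
definition spi :: "6 \<times> 6 \<Rightarrow> 6 \<times> 6 \<Rightarrow> 6 \<times> 6" where
  "spi = (\<lambda>(a, b) (c, d). (c - b, d - 3))"
definition s6 :: "(6 \<times> 6) \<times> (6 \<times> 6) \<Rightarrow> (6 \<times> 6) \<times> (6 \<times> 6)" where
  "s6 = (\<lambda>(x, y). (sp x y, spi (sp x y) x))"
definition f3 :: "6 \<times> 6 \<Rightarrow> 6 \<times> 6" where
  "f3 = (\<lambda>(a, b). (3 * a, 3 * b))"

lemma sp_spi: "sp x (spi x y) = y"
  by (cases x; cases y) (simp add: sp_def spi_def)
lemma spi_sp: "spi x (sp x y) = y"
  by (cases x; cases y) (simp add: sp_def spi_def)
lemma star_sp: "sp x (sp y z) = sp (sp x y) (sp (spi (sp x y) x) z)"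
  by (cases x; cases y; cases z) (simp add: sp_def spi_def algebra_simps)

lemma six0: "(6::6) * a = 0"
proof -
  have h: "(6::6) = 0" by simp
  show ?thesis by (simp only: h mult_zero_left)
qed

lemma six0': "a * (6::6) = 0"
  using six0[of a] by (simp only: mult.commute)

lemma Y_mem: "p \<in> range f3 \<longleftrightarrow> (\<exists>a b. p = (3 * a, 3 * b))"
  by (auto simp: f3_def)

lemma memI: "(3*a, 3*b) \<in> range f3"
  using rangeI[of f3 "(a, b)"] by (simp add: f3_def)

lemma sigma_s6: "ybe_sigma s6 x = sp x"
  by (rule ext) (simp add: ybe_sigma_def s6_def)

lemma ybeY: "ybe_solution (range f3) s6"
  unfolding ybe_solution_def
proof (intro conjI ballI)
  show "range f3 \<noteq> {}" by simp
next
  fix x y assume "x \<in> range f3" "y \<in> range f3"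
  then obtain a b c d where x: "x = (3*a, 3*b)" and y: "y = (3*c, 3*d)" by (auto simp: Y_mem)
  have e: "s6 (x, y) = ((3*(c+b), 3*(d+1)), (3*(a - d - 1), 3*(b - 1)))"
    by (simp add: s6_def sp_def spi_def x y algebra_simps)
  show "s6 (x, y) \<in> range f3 \<times> range f3" unfolding e by (blast intro: memI)
next
  fix x y show "s6 (s6 (x, y)) = (x, y)"
    by (rule generic_invol[OF sp_spi spi_sp s6_def])
next
  fix x assume "x \<in> range f3"
  then obtain a b where x: "x = (3*a, 3*b)" by (auto simp: Y_mem)
  have inv: "sp x (sp x y) = y" for y
    by (cases y) (simp add: sp_def x algebra_simps six0')
  have cl: "sp x y \<in> range f3" if yY: "y \<in> range f3" for y
  proof -
    obtain c d where y: "y = (3*c, 3*d)" using yY unfolding Y_mem by blast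
    have "sp x y = (3*(c+b), 3*(d+1))" by (simp add: sp_def x y algebra_simps)
    then show ?thesis by (simp only: memI)
  qed
  show "bij_betw (ybe_sigma s6 x) (range f3) (range f3)"
    unfolding sigma_s6
    by (rule bij_betw_byWitness[where f'="sp x"]) (auto simp: inv cl)
next
  fix y assume "y \<in> range f3"
  then obtain c d where y: "y = (3*c, 3*d)" by (auto simp: Y_mem)
  have g: "ybe_gamma s6 y (a, b) = (a - 3*d - 3, b - 3)" for a b
    by (simp add: ybe_gamma_def s6_def sp_def spi_def y algebra_simps)
  have inv: "ybe_gamma s6 y (ybe_gamma s6 y p) = p" for p
  proof (cases p)
    case (Pair a b)
    have h6: "(6::6) = 0" by simp
    have "a - 3 * d - 3 - 3 * d - 3 = a - 6 * d - 6" by (simp add: algebra_simps)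
    also have "\<dots> = a" by (simp only: h6 mult_zero_left diff_zero)
    finally have e1: "a - 3 * d - 3 - 3 * d - 3 = a" .
    have "b - 3 - 3 = b - 6" by (simp add: algebra_simps)
    also have "\<dots> = b" by (simp only: h6 diff_zero)
    finally have e2: "b - 3 - 3 = b" .
    show ?thesis using Pair by (simp only: g e1 e2)
  qed
  have cl: "ybe_gamma s6 y p \<in> range f3" if yY: "p \<in> range f3" for p
  proof -
    obtain a b where p: "p = (3*a, 3*b)" using yY unfolding Y_mem by blast
    have "ybe_gamma s6 y p = (3*(a - d - 1), 3*(b - 1))" by (simp add: g p algebra_simps)
    then show ?thesis by (simp only: memI)
  qed
  show "bij_betw (ybe_gamma s6 y) (range f3) (range f3)"
    by (rule bij_betw_byWitness[where f'="ybe_gamma s6 y"]) (auto simp: inv cl)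
next
  fix x y z show "r12 s6 (r23 s6 (r12 s6 (x, y, z))) = r23 s6 (r12 s6 (r23 s6 (x, y, z)))"
    by (rule generic_ybe[OF sp_spi spi_sp star_sp s6_def])
qed

lemma hom3: "solution_hom UNIV r6 (range f3) s6 f3"
  unfolding solution_hom_def
proof (intro conjI ballI)
  show "f3 ` UNIV \<subseteq> range f3" by simp
next
  fix x y :: "6 \<times> 6"
  obtain i j where x: "x = (i, j)" by (cases x)
  obtain k l where y: "y = (k, l)" by (cases y)
  have "3 * (l - jj (k + j - i)) = 3 * l + 3"
    by (simp add: jj_def algebra_simps)
  then show "f3 (ybe_sigma r6 x y) = ybe_sigma s6 (f3 x) (f3 y)"
    by (simp add: sigma_r6 sigma_s6 x y sig6_app f3_def sp_def algebra_simps)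
qed

lemma notsimple6: "\<not> simple_solution (UNIV :: (6 \<times> 6) set) r6"
proof
  assume "simple_solution (UNIV :: (6 \<times> 6) set) r6"
  then have "bij_betw f3 UNIV (range f3) \<or> (\<exists>a. range f3 = {a})"
    unfolding simple_solution_def using ybeY hom3 by blast
  moreover have "\<not> bij_betw f3 UNIV (range f3)"
  proof
    assume "bij_betw f3 UNIV (range f3)"
    then have "inj f3" by (simp add: bij_betw_def)
    moreover have "f3 (0, 0) = f3 (2, 0)" by (simp add: f3_def)
    ultimately have "((0::6), (0::6)) = (2, 0)" by (rule injD)
    then show False by simp
  qed
  moreover have "\<not> (\<exists>a. range f3 = {a})"
  proof
    assume "\<exists>a. range f3 = {a}"
    then obtain a where a: "range f3 = {a}" by blast
    have "f3 (0, 0) = a" "f3 (1, 0) = a" using a by auto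
    then have "f3 (0, 0) = f3 (1, 0)" by simp
    then show False by (simp add: f3_def)
  qed
  ultimately show False by blast
qed

theorem mainTheorem7:
  shows "ybe_solution (UNIV :: (6 \<times> 6) set) r6 \<and> indecomposable UNIV r6 \<and>
         irretractable UNIV r6 \<and> \<not> simple_solution UNIV r6"
  using ybe6 indec6 irr6 notsimple6 by blast

end
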